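(* Let $\Sigma$ be an alphabet with $|\Sigma|\ge 3$. A function $f\colon\Sigma^*\to\Sigma^*$ is congruence preserving if and only if it is RCP.
   Context: $\Sigma^*$ denotes the free monoid over $\Sigma$ (finite words, concatenation, empty word $\varepsilon$). A congruence on $\Sigma^*$ is an equivalence relation $\sim$ such that $u\sim v$ and $u'\sim v'$ imply $uu'\sim vv'$. A function $f\colon(\Sigma^* )^k\to\Sigma^*$ is congruence preserving (CP) if for every congruence $\sim$ on $\Sigma^*$ and all $u_i\sim v_i$ ($i=1,\ldots,k$), $f(u_1,\ldots,u_k)\sim f(v_1,\ldots,v_k)$. A restricted congruence on $\Sigma^*$ is the kernel $\{(u,v)\mid \varphi(u)=\varphi(v)\}$ of a monoid morphism $\varphi\colon\Sigma^*\to\Sigma^*$. A function $f\colon(\Sigma^* )^k\to\Sigma^*$ is RCP if for every monoid morphism $\varphi\colon\Sigma^*\to\Sigma^*$ and all $u_1,\ldots,u_k,v_1,\ldots,v_k$ with $\varphi(u_i)=\varphi(v_i)$ for all $i$, we have $\varphi(f(u_1,\ldots,u_k))=\varphi(f(v_1,\ldots,v_k))$. *)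

theory Defs
  imports Main
begin

definition word_congruence :: "('a list \<times> 'a list) set \<Rightarrow> bool" where
  "word_congruence R \<longleftrightarrow> equiv UNIV R \<and>
     (\<forall>u v u' v'. (u, v) \<in> R \<longrightarrow> (u', v') \<in> R \<longrightarrow> (u @ u', v @ v') \<in> R)"

definition congruence_preserving :: "('a list \<Rightarrow> 'a list) \<Rightarrow> bool" where
  "congruence_preserving f \<longleftrightarrow>
     (\<forall>R u v. word_congruence R \<longrightarrow> (u, v) \<in> R \<longrightarrow> (f u, f v) \<in> R)"

definition monoid_morphism :: "('a list \<Rightarrow> 'a list) \<Rightarrow> bool" where
  "monoid_morphism \<phi> \<longleftrightarrow> \<phi> [] = [] \<and> (\<forall>u v. \<phi> (u @ v) = \<phi> u @ \<phi> v)"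

definition RCP :: "('a list \<Rightarrow> 'a list) \<Rightarrow> bool" where
  "RCP f \<longleftrightarrow>
     (\<forall>\<phi> u v. monoid_morphism \<phi> \<longrightarrow> \<phi> u = \<phi> v \<longrightarrow> \<phi> (f u) = \<phi> (f v))"

end

theory Submission
  imports Defs
begin

definition homw :: "('a \<Rightarrow> 'a list) \<Rightarrow> 'a list \<Rightarrow> 'a list" where
  "homw h w = concat (map h w)"

lemma homw_simps[simp]: "homw h [] = []" "homw h (y # w) = h y @ homw h w"
  "homw h (u @ v) = homw h u @ homw h v"
  by (simp_all add: homw_def)

lemma mm_homw: "monoid_morphism (homw h)"
  by (simp add: monoid_morphism_def)

lemma RCP_homw: "RCP f \<Longrightarrow> homw h u = homw h v \<Longrightarrow> homw h (f u) = homw h (f v)"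
  unfolding RCP_def using mm_homw by blast

definition mkr :: "'a \<Rightarrow> 'a list \<Rightarrow> 'a \<Rightarrow> 'a list" where
  "mkr c v y = (if y = c then v else [y])"

definition mrg :: "'a \<Rightarrow> 'a \<Rightarrow> 'a \<Rightarrow> 'a" where
  "mrg d a y = (if y = d then a else y)"

lemma mkr_same[simp]: "mkr c v c = v" by (simp add: mkr_def)
lemma mkr_other[simp]: "y \<noteq> c \<Longrightarrow> mkr c v y = [y]" by (simp add: mkr_def)

lemma homw_mkr_free: "c \<notin> set x \<Longrightarrow> homw (mkr c v) x = x"
  by (induction x) (auto simp: mkr_def)

lemma homw_map: "homw (\<lambda>y. [g y]) w = map g w"
  by (induction w) auto

lemma homw_erase: "homw (\<lambda>y. if y = s then [] else [y]) w = filter (\<lambda>y. y \<noteq> s) w"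
  by (induction w) auto

lemma J0:
  assumes "a \<noteq> d" "a' \<noteq> d" "a \<noteq> a'"
    "map (mrg d a) w = map (mrg d a) w'" "map (mrg d a') w = map (mrg d a') w'"
  shows "w = w'"
proof -
  have len: "length w = length w'" using assms(4) by (metis length_map)
  show ?thesis
  proof (rule nth_equalityI[OF len])
    fix i assume "i < length w"
    hence "mrg d a (w!i) = mrg d a (w'!i)" "mrg d a' (w!i) = mrg d a' (w'!i)"
      using assms(4,5) len by (metis nth_map)+
    thus "w!i = w'!i" using assms(1-3) unfolding mrg_def by (auto split: if_splits)
  qed
qed

lemma J2:
  assumes "c \<noteq> a" "c \<noteq> d" "a \<noteq> d"
  shows "homw (mkr c v) w = homw (mkr c v) w' \<Longrightarrow> map (mrg d a) w = map (mrg d a) w' \<Longrightarrow> w = w'"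
proof (induction w arbitrary: w')
  case Nil thus ?case by simp
next
  case (Cons y ws)
  then obtain z zs where w': "w' = z # zs" by (cases w') auto
  show ?case
  proof (cases "y = z")
    case True
    with Cons.prems w' have "homw (mkr c v) ws = homw (mkr c v) zs" "map (mrg d a) ws = map (mrg d a) zs"
      by auto
    with Cons.IH True w' show ?thesis by simp
  next
    case False
    from Cons.prems(2) w' have "mrg d a y = mrg d a z" by simp
    with False have yz: "y \<noteq> c" "z \<noteq> c" using assms unfolding mrg_def by (auto split: if_splits)
    from Cons.prems(1) w' yz have "y = z" by (simp add: mkr_def)
    with False show ?thesis by simp
  qed
qed

lemma J1:
  assumes "b \<noteq> c" "v \<noteq> []" "b \<notin> set v" "c \<notin> set v"
  shows "homw (mkr b v) w = homw (mkr b v) w' \<Longrightarrow> homw (mkr c v) w = homw (mkr c v) w' \<Longrightarrow> w = w'"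
proof (induction w arbitrary: w')
  case Nil thus ?case using assms(2) by (cases w') (auto simp: mkr_def split: if_splits)
next
  case (Cons y ws)
  show ?case
  proof (cases w')
    case Nil thus ?thesis using Cons.prems assms(2) by (auto simp: mkr_def split: if_splits)
  next
    case (Cons z zs)
    note w' = this
    show ?thesis
    proof (cases "y = z")
      case True
      with Cons.prems w' have "homw (mkr b v) ws = homw (mkr b v) zs" "homw (mkr c v) ws = homw (mkr c v) zs"
        by auto
      with Cons.IH True w' show ?thesis by simp
    next
      case False
      have "y = b \<or> z = b"
      proof (rule ccontr)
        assume "\<not> (y = b \<or> z = b)"
        with Cons.prems(1) w' have "y = z" by (simp add: mkr_def)
        with False show False by simp
      qed
      moreover have "y = c \<or> z = c"
      proof (rule ccontr)
        assume "\<not> (y = c \<or> z = c)"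
        with Cons.prems(2) w' have "y = z" by (simp add: mkr_def)
        with False show False by simp
      qed
      ultimately have "(y = b \<and> z = c) \<or> (y = c \<and> z = b)" using assms(1) False by blast
      thus ?thesis
      proof
        assume yz: "y = b \<and> z = c"
        with Cons.prems(1) w' assms(1) have "v @ homw (mkr b v) ws = c # homw (mkr b v) zs"
          by simp
        with assms(2,4) show ?thesis by (cases v) auto
      next
        assume yz: "y = c \<and> z = b"
        with Cons.prems(2) w' assms(1) have "v @ homw (mkr c v) ws = b # homw (mkr c v) zs"
          by simp
        with assms(2,3) show ?thesis by (cases v) auto
      qed
    qed
  qed
qed

lemma card_ge2: "2 \<le> card S \<Longrightarrow> \<exists>a b. a \<in> S \<and> b \<in> S \<and> a \<noteq> b"
proof -
  assume h: "2 \<le> card S"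
  then have "S \<noteq> {}" by auto
  then obtain a where a: "a \<in> S" by blast
  have "card (S - {a}) \<ge> 1" using h a by (simp add: card_Diff_singleton)
  then have "S - {a} \<noteq> {}" by (metis card.empty not_one_le_zero)
  then obtain b where "b \<in> S - {a}" by blast
  thus ?thesis using a by blast
qed

lemma card_ge3: "3 \<le> card S \<Longrightarrow> \<exists>a b c. a \<in> S \<and> b \<in> S \<and> c \<in> S \<and> a \<noteq> b \<and> a \<noteq> c \<and> b \<noteq> c"
proof -
  assume h: "3 \<le> card S"
  then have "S \<noteq> {}" by auto
  then obtain a where a: "a \<in> S" by blast
  have "card (S - {a}) \<ge> 2" using h a by (simp add: card_Diff_singleton)
  then obtain b c where "b \<in> S - {a}" "c \<in> S - {a}" "b \<noteq> c" using card_ge2 by blast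
  thus ?thesis using a by blast
qed

definition evp :: "'a option list \<Rightarrow> 'a list \<Rightarrow> 'a list" where
  "evp ps x = concat (map (\<lambda>oo. case oo of None \<Rightarrow> x | Some l \<Rightarrow> [l]) ps)"

lemma evp_simps[simp]: "evp [] x = []" "evp (None # ps) x = x @ evp ps x"
  "evp (Some l # ps) x = l # evp ps x"
  by (simp_all add: evp_def)

lemma evp_morph:
  assumes "monoid_morphism \<phi>"
  shows "\<phi> (evp ps x) = concat (map (\<lambda>oo. case oo of None \<Rightarrow> \<phi> x | Some l \<Rightarrow> \<phi> [l]) ps)"
proof (induction ps)
  case Nil thus ?case using assms by (simp add: monoid_morphism_def)
next
  case (Cons oo ps)
  have app: "\<phi> (u @ v) = \<phi> u @ \<phi> v" for u v using assms by (simp add: monoid_morphism_def)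
  show ?case
  proof (cases oo)
    case None thus ?thesis using Cons by (simp add: app)
  next
    case (Some l)
    have "\<phi> (l # evp ps x) = \<phi> ([l] @ evp ps x)" by simp
    also have "\<dots> = \<phi> [l] @ \<phi> (evp ps x)" by (rule app)
    finally have "\<phi> (l # evp ps x) = \<phi> [l] @ \<phi> (evp ps x)" .
    thus ?thesis using Cons Some by simp
  qed
qed

lemma evp_RCP: "RCP (evp ps)"
  unfolding RCP_def using evp_morph by metis

lemma evp_CP: "congruence_preserving (evp ps)"
  unfolding congruence_preserving_def
proof (intro allI impI)
  fix R :: "('a list \<times> 'a list) set" and u v
  assume R: "word_congruence R" and uv: "(u, v) \<in> R"
  have refl: "(x, x) \<in> R" for x using R unfolding word_congruence_def equiv_def refl_on_def by auto
  have comp: "(p, q) \<in> R \<Longrightarrow> (p', q') \<in> R \<Longrightarrow> (p @ p', q @ q') \<in> R" for p q p' q'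
    using R unfolding word_congruence_def by blast
  show "(evp ps u, evp ps v) \<in> R"
  proof (induction ps)
    case Nil thus ?case using refl by simp
  next
    case (Cons oo ps)
    show ?case
    proof (cases oo)
      case None thus ?thesis using comp[OF uv Cons] by simp
    next
      case (Some l) thus ?thesis using comp[OF refl Cons, of "[l]"] by simp
    qed
  qed
qed

lemma mrg_idem: "a \<noteq> d \<Longrightarrow> map (mrg d a) (map (mrg d a) x) = map (mrg d a) x"
  by (induction x) (auto simp: mrg_def)

lemma U:
  fixes f g :: "'a::finite list \<Rightarrow> 'a list"
  assumes card3: "3 \<le> card (UNIV::'a set)" and f: "RCP f" and g: "RCP g"
    and e: "f [] = g []" and l: "\<And>s. f [s] = g [s]"
  shows "f x = g x"
proof (induction "card (set x)" arbitrary: x rule: less_induct)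
  case less
  have mark: "homw (mkr c x) (f x) = homw (mkr c x) (g x)" if "c \<notin> set x" for c
  proof -
    have h: "homw (mkr c x) [c] = homw (mkr c x) x" using that by (simp add: homw_mkr_free mkr_def)
    have "homw (mkr c x) (f x) = homw (mkr c x) (f [c])" using RCP_homw[OF f h[symmetric]] .
    also have "\<dots> = homw (mkr c x) (g [c])" by (simp add: l)
    also have "\<dots> = homw (mkr c x) (g x)" using RCP_homw[OF g h] .
    finally show ?thesis .
  qed
  have merge: "map (mrg d a) (f x) = map (mrg d a) (g x)" if "a \<in> set x" "d \<in> set x" "a \<noteq> d" for a d
  proof -
    let ?x' = "map (mrg d a) x"
    have "set ?x' \<subseteq> set x - {d}" using that by (auto simp: mrg_def)
    then have "set ?x' \<subset> set x" using that(2) by blast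
    then have lt: "card (set ?x') < card (set x)" by (simp add: psubset_card_mono)
    have fx: "f ?x' = g ?x'" using less lt by blast
    have ii: "mrg d a (mrg d a y) = mrg d a y" for y using that(3) by (simp add: mrg_def)
    have idem: "map (mrg d a) ?x' = ?x'" using mrg_idem[OF that(3)] .
    have h: "homw (\<lambda>y. [mrg d a y]) x = homw (\<lambda>y. [mrg d a y]) ?x'" by (simp only: homw_map idem)
    have "map (mrg d a) (f x) = map (mrg d a) (f ?x')"
      using RCP_homw[OF f h] by (simp add: homw_map)
    also have "\<dots> = map (mrg d a) (g ?x')" by (simp add: fx)
    also have "\<dots> = map (mrg d a) (g x)"
      using RCP_homw[OF g h] by (simp add: homw_map)
    finally show ?thesis .
  qed
  have cd: "card (UNIV - set x) = card (UNIV::'a set) - card (set x)"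
    by (simp add: card_Diff_subset)
  consider "card (set x) = 0" | "card (set x) = 1" | "card (set x) = 2" | "3 \<le> card (set x)" by linarith
  then show ?case
  proof cases
    case 1
    then have "x = []" by simp
    thus ?thesis using e by simp
  next
    case 2
    then have "x \<noteq> []" by auto
    from 2 cd card3 have "2 \<le> card (UNIV - set x)" by simp
    then obtain b c where bc: "b \<in> UNIV - set x" "c \<in> UNIV - set x" "b \<noteq> c" using card_ge2 by blast
    show ?thesis using J1[of b c x "f x" "g x"] bc \<open>x \<noteq> []\<close> mark by blast
  next
    case 3
    then obtain a d where ad: "a \<in> set x" "d \<in> set x" "a \<noteq> d" using card_ge2 by (metis order.refl)
    from 3 cd card3 have "1 \<le> card (UNIV - set x)" by simp
    then have "UNIV - set x \<noteq> {}" by (metis card.empty not_one_le_zero)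
    then obtain c where c: "c \<notin> set x" by blast
    have "c \<noteq> a" "c \<noteq> d" using c ad by auto
    then show ?thesis using J2[of c a d x "f x" "g x"] ad mark[OF c] merge[OF ad] by blast
  next
    case 4
    then obtain d a a' where daa: "d \<in> set x" "a \<in> set x" "a' \<in> set x" "d \<noteq> a" "d \<noteq> a'" "a \<noteq> a'"
      using card_ge3 by blast
    show ?thesis using J0[of a d a' "f x" "g x"] daa merge by metis
  qed
qed

lemma filter_cons_cancel: "filter P (l # A) = filter P (l # B) \<Longrightarrow> filter P A = filter P B"
  by (auto split: if_splits)


lemma evp_rep: "evp (replicate L None) x = concat (replicate L x)"
  by (induction L) auto

lemma concat_rep_single: "concat (replicate L [s]) = replicate L s"
  by (induction L) auto

lemma exist:
  fixes T :: "'a::finite \<Rightarrow> 'a list"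
  assumes card3: "3 \<le> card (UNIV::'a set)"
  shows "length (T s0) = N \<Longrightarrow> (\<forall>s. filter (\<lambda>y. y \<noteq> s) (T s) = filter (\<lambda>y. y \<noteq> s) e)
    \<Longrightarrow> (\<forall>s t. map (mrg s t) (T s) = map (mrg s t) (T t))
    \<Longrightarrow> \<exists>ps. evp ps [] = e \<and> (\<forall>s. evp ps [s] = T s)"
proof (induction N arbitrary: e T rule: less_induct)
  case (less N)
  note C1 = less.prems(2) and C2 = less.prems(3)
  have len: "length (T s) = length (T s0)" for s using C2[rule_format, of s s0] by (metis length_map)
  show ?case
  proof (cases e)
    case Nil
    obtain L where L: "L = length (T s0)" by simp
    have TL: "T s = replicate L s" for s
    proof -
      have "filter (\<lambda>y. y \<noteq> s) (T s) = []" using C1 Nil by simp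
      then have "\<forall>y\<in>set (T s). y = s" by (simp add: filter_empty_conv)
      then have "replicate (length (T s)) s = T s" by (rule replicate_length_same)
      moreover have "length (T s) = L" using len[of s] L by simp
      ultimately show ?thesis by simp
    qed
    have "evp (replicate L None) [] = e" using Nil by (simp add: evp_rep)
    moreover have "\<forall>s. evp (replicate L None) [s] = T s" using TL by (simp add: evp_rep concat_rep_single)
    ultimately show ?thesis by blast
  next
    case (Cons l e')
    have "2 \<le> card (UNIV - {l})" using card3 by (simp add: card_Diff_singleton)
    then obtain s t where st: "s \<noteq> l" "t \<noteq> l" "s \<noteq> t" using card_ge2 by blast
    have hdT: "T r \<noteq> [] \<and> (hd (T r) = r \<or> hd (T r) = l)" if "r \<noteq> l" for r
    proof -
      have fe: "filter (\<lambda>y. y \<noteq> r) (T r) = l # filter (\<lambda>y. y \<noteq> r) e'"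
        using C1 Cons that by simp
      then have ne: "T r \<noteq> []" by auto
      then obtain y ys where T: "T r = y # ys" by (cases "T r") auto
      have "y = r \<or> y = l" using fe T by (auto split: if_splits)
      thus ?thesis using T by simp
    qed
    have nonempty: "T r \<noteq> []" for r
    proof -
      have "T s \<noteq> []" using hdT st by blast
      then have "length (T s) > 0" by simp
      then have "length (T r) > 0" using len[of s] len[of r] by simp
      thus ?thesis by simp
    qed
    have hdmap: "hd (map h (T r)) = h (hd (T r))" for h r using nonempty[of r] by (simp add: hd_map)
    have cons: "hd (T r) = r \<longleftrightarrow> hd (T s) = s" if "r \<noteq> l" "r \<noteq> s" for r
    proof -
      have "hd (map (mrg s r) (T s)) = hd (map (mrg s r) (T r))" using C2[rule_format, of s r] by simp
      then have "mrg s r (hd (T s)) = mrg s r (hd (T r))" by (simp add: hdmap)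
      thus ?thesis using hdT[of s] hdT[of r] that st unfolding mrg_def by (auto split: if_splits)
    qed
    have hdl: "hd (T l) = l"
    proof -
      have A: "hd (T l) = l \<or> hd (T l) = q" if "q \<noteq> l" for q
      proof -
        have "hd (map (mrg l q) (T l)) = hd (map (mrg l q) (T q))" using C2[rule_format, of l q] by simp
        then have "mrg l q (hd (T l)) = mrg l q (hd (T q))" by (simp add: hdmap)
        then have "mrg l q (hd (T l)) = q" using hdT[OF that] unfolding mrg_def by auto
        thus ?thesis unfolding mrg_def by (auto split: if_splits)
      qed
      show ?thesis using A[OF st(1)] A[OF st(2)] st(3) by auto
    qed
    have Npos: "N = Suc (N - 1)" using nonempty[of s0] less.prems(1) by (cases N) auto
    have lt: "N - 1 < N" using Npos by linarith
    have C2': "\<forall>r q. map (mrg r q) (tl (T r)) = map (mrg r q) (tl (T q))"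
      using C2 by (metis map_tl)
    have lenT': "length (tl (T s0)) = N - 1" using less.prems(1) by simp
    show ?thesis
    proof (cases "hd (T s) = l")
      case True
      have allh: "hd (T r) = l" for r
      proof (cases "r = l")
        case True thus ?thesis using hdl by simp
      next
        case False
        show ?thesis
        proof (cases "r = s")
          case True thus ?thesis using \<open>hd (T s) = l\<close> by simp
        next
          case False
          then have "hd (T r) \<noteq> r" using cons[of r] \<open>r \<noteq> l\<close> \<open>hd (T s) = l\<close> st by auto
          thus ?thesis using hdT[OF \<open>r \<noteq> l\<close>] by auto
        qed
      qed
      have Tr: "T r = l # tl (T r)" for r using nonempty[of r] allh[of r] by (cases "T r") auto
      have C1': "\<forall>r. filter (\<lambda>y. y \<noteq> r) (tl (T r)) = filter (\<lambda>y. y \<noteq> r) e'"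
      proof
        fix r
        have "filter (\<lambda>y. y \<noteq> r) (l # tl (T r)) = filter (\<lambda>y. y \<noteq> r) (l # e')"
          using C1 Cons Tr[of r] by metis
        thus "filter (\<lambda>y. y \<noteq> r) (tl (T r)) = filter (\<lambda>y. y \<noteq> r) e'" by (rule filter_cons_cancel)
      qed
      obtain ps where ps: "evp ps [] = e'" "\<forall>r. evp ps [r] = tl (T r)"
        using less.IH[OF lt lenT' C1' C2'] by blast
      show ?thesis
        by (intro exI[of _ "Some l # ps"]) (simp add: ps Cons Tr[symmetric])
    next
      case False
      then have hs: "hd (T s) = s" using hdT[OF st(1)] by auto
      have allh: "hd (T r) = r" for r
      proof (cases "r = l")
        case True thus ?thesis using hdl by simp
      next
        case False
        show ?thesis
        proof (cases "r = s")
          case True thus ?thesis using hs by simp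
        next
          case False
          thus ?thesis using cons[of r] \<open>r \<noteq> l\<close> hs by auto
        qed
      qed
      have Tr: "T r = r # tl (T r)" for r using nonempty[of r] allh[of r] by (cases "T r") auto
      have C1': "\<forall>r. filter (\<lambda>y. y \<noteq> r) (tl (T r)) = filter (\<lambda>y. y \<noteq> r) e"
      proof
        fix r
        have "filter (\<lambda>y. y \<noteq> r) (tl (T r)) = filter (\<lambda>y. y \<noteq> r) (r # tl (T r))" by simp
        also have "\<dots> = filter (\<lambda>y. y \<noteq> r) e" using C1 Tr[of r] by metis
        finally show "filter (\<lambda>y. y \<noteq> r) (tl (T r)) = filter (\<lambda>y. y \<noteq> r) e" .
      qed
      obtain ps where ps: "evp ps [] = e" "\<forall>r. evp ps [r] = tl (T r)"
        using less.IH[OF lt lenT' C1' C2'] by blast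
      show ?thesis
        by (intro exI[of _ "None # ps"]) (simp add: ps Tr[symmetric])
    qed
  qed
qed

theorem mainTheorem4:
  fixes f :: "'a::finite list \<Rightarrow> 'a list"
  assumes "card (UNIV :: 'a set) \<ge> 3"
  shows "congruence_preserving f \<longleftrightarrow> RCP f"
proof
  assume cp: "congruence_preserving f"
  show "RCP f"
    unfolding RCP_def
  proof (intro allI impI)
    fix \<phi> :: "'a list \<Rightarrow> 'a list" and u v
    assume m: "monoid_morphism \<phi>" and uv: "\<phi> u = \<phi> v"
    let ?R = "{(x, y). \<phi> x = \<phi> y}"
    have "word_congruence ?R"
      using m unfolding word_congruence_def equiv_def refl_on_def sym_def trans_def monoid_morphism_def
      by auto
    then have "(f u, f v) \<in> ?R" using cp uv unfolding congruence_preserving_def by blast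
    thus "\<phi> (f u) = \<phi> (f v)" by simp
  qed
next
  assume r: "RCP f"
  have C1: "\<forall>s. filter (\<lambda>y. y \<noteq> s) (f [s]) = filter (\<lambda>y. y \<noteq> s) (f [])"
  proof
    fix s :: 'a
    have "homw (\<lambda>y. if y = s then [] else [y]) [s] = homw (\<lambda>y. if y = s then [] else [y]) []" by simp
    from RCP_homw[OF r this] show "filter (\<lambda>y. y \<noteq> s) (f [s]) = filter (\<lambda>y. y \<noteq> s) (f [])"
      by (simp add: homw_erase)
  qed
  have C2: "\<forall>s t. map (mrg s t) (f [s]) = map (mrg s t) (f [t])"
  proof (intro allI)
    fix s t :: 'a
    have "homw (\<lambda>y. [mrg s t y]) [s] = homw (\<lambda>y. [mrg s t y]) [t]" by (simp add: mrg_def)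
    from RCP_homw[OF r this] show "map (mrg s t) (f [s]) = map (mrg s t) (f [t])"
      by (simp add: homw_map)
  qed
  obtain ps where ps: "evp ps [] = f []" "\<forall>s. evp ps [s] = f [s]"
    using exist[OF assms, of "\<lambda>s. f [s]" undefined _ "f []"] C1 C2 by blast
  have "f = evp ps"
  proof
    fix x show "f x = evp ps x"
      using U[OF assms r evp_RCP] ps by metis
  qed
  thus "congruence_preserving f" using evp_CP by simp
qed

end
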